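(* Let $V$ be finite, $\omega:V\to\mathbb{R}_{>0}$, $W:=\sum_{i\in V}\omega_i$, and vectors $\{v_i\}_{i\in V}$ with $\sum_{\{i,j\}\subseteq V,i\ne j}\omega_i\omega_j\|v_i-v_j\|^2=1$. Suppose $i_0\in V$ and let $L:=\{j\in V:\|v_{i_0}-v_j\|^2\le\frac{1}{8W^2}\}$ (nonempty as $i_0\in L$). For $j\in V$ let $\Delta(j,L):=\min_{i\in L}\|v_i-v_j\|^2$. Then $\sum_{j\in V\setminus L}\omega_j\Delta(j,L)\ge\frac{1}{8W}$. *)

theory Defs
  imports "HOL-Analysis.Analysis"
begin

definition Delta :: "('i \<Rightarrow> 'a::real_normed_vector) \<Rightarrow> 'i \<Rightarrow> 'i set \<Rightarrow> real" where
  "Delta v j L = Min ((\<lambda>i. (norm (v i - v j))\<^sup>2) ` L)"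

end

theory Submission
  imports Defs
begin

lemma sq_norm_add_le: "(norm (a + b::'a::real_normed_vector))\<^sup>2 \<le> 2 * (norm a)\<^sup>2 + 2 * (norm b)\<^sup>2"
proof -
  have "norm (a+b) \<le> norm a + norm b" by (rule norm_triangle_ineq)
  hence "(norm (a+b))\<^sup>2 \<le> (norm a + norm b)\<^sup>2" by (simp add: power_mono)
  also have "\<dots> \<le> 2 * (norm a)\<^sup>2 + 2 * (norm b)\<^sup>2"
    using sum_squares_ge_zero[of "norm a - norm b" 0] by (simp add: power2_eq_square algebra_simps)
  finally show ?thesis .
qed

lemma pair_identity:
  fixes x :: "'i \<Rightarrow> 'a::real_inner"
  shows "(\<Sum>i\<in>V. \<Sum>j\<in>V. \<omega> i * \<omega> j * (norm (x i - x j))\<^sup>2)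
    = 2 * (\<Sum>i\<in>V. \<omega> i) * (\<Sum>j\<in>V. \<omega> j * (norm (x j))\<^sup>2)
      - 2 * (norm (\<Sum>j\<in>V. \<omega> j *\<^sub>R x j))\<^sup>2"
proof -
  have e: "\<And>i j. \<omega> i * \<omega> j * (norm (x i - x j))\<^sup>2 =
     \<omega> j * (\<omega> i * (norm (x i))\<^sup>2) + \<omega> i * (\<omega> j * (norm (x j))\<^sup>2) - 2 * ((\<omega> i *\<^sub>R x i) \<bullet> (\<omega> j *\<^sub>R x j))"
    by (simp add: power2_norm_eq_inner inner_diff_left inner_diff_right inner_commute algebra_simps)
  have "(\<Sum>i\<in>V. \<Sum>j\<in>V. \<omega> i * \<omega> j * (norm (x i - x j))\<^sup>2)
     = (\<Sum>i\<in>V. \<Sum>j\<in>V. \<omega> j * (\<omega> i * (norm (x i))\<^sup>2)) + (\<Sum>i\<in>V. \<Sum>j\<in>V. \<omega> i * (\<omega> j * (norm (x j))\<^sup>2))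
       - 2 * (\<Sum>i\<in>V. \<Sum>j\<in>V. (\<omega> i *\<^sub>R x i) \<bullet> (\<omega> j *\<^sub>R x j))"
    by (simp only: e sum_subtractf sum.distrib sum_distrib_left)
  also have "(\<Sum>i\<in>V. \<Sum>j\<in>V. (\<omega> i *\<^sub>R x i) \<bullet> (\<omega> j *\<^sub>R x j)) = (norm (\<Sum>j\<in>V. \<omega> j *\<^sub>R x j))\<^sup>2"
    by (simp add: power2_norm_eq_inner inner_sum_left inner_sum_right sum_distrib_left)
       (subst sum.swap, simp add: sum_distrib_left)
  also have "(\<Sum>i\<in>V. \<Sum>j\<in>V. \<omega> j * (\<omega> i * (norm (x i))\<^sup>2)) = (\<Sum>i\<in>V. \<omega> i) * (\<Sum>j\<in>V. \<omega> j * (norm (x j))\<^sup>2)"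
    by (simp add: sum_distrib_left sum_distrib_right mult.commute)
  also have "(\<Sum>i\<in>V. \<Sum>j\<in>V. \<omega> i * (\<omega> j * (norm (x j))\<^sup>2)) = (\<Sum>i\<in>V. \<omega> i) * (\<Sum>j\<in>V. \<omega> j * (norm (x j))\<^sup>2)"
    by (simp add: sum_distrib_left[symmetric] sum_distrib_right[symmetric])
  finally show ?thesis by linarith
qed

theorem mainTheorem11:
  fixes V :: "'i set" and \<omega> :: "'i \<Rightarrow> real" and v :: "'i \<Rightarrow> 'a::euclidean_space"
    and W :: real and L :: "'i set" and i0 :: 'i
  assumes "finite V"
    and "\<forall>i\<in>V. \<omega> i > 0"
    and "W = (\<Sum>i\<in>V. \<omega> i)"
    and "(1/2) * (\<Sum>i\<in>V. \<Sum>j\<in>V - {i}. \<omega> i * \<omega> j * (norm (v i - v j))\<^sup>2) = 1"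
    and "i0 \<in> V"
    and "L = {j\<in>V. (norm (v i0 - v j))\<^sup>2 \<le> 1 / (8 * W\<^sup>2)}"
  shows "(\<Sum>j\<in>V - L. \<omega> j * Delta v j L) \<ge> 1 / (8 * W)"
proof -
  note fin = assms(1)
  have pos: "\<forall>i\<in>V. \<omega> i \<ge> 0" using assms(2) by (simp add: less_imp_le)
  define x where "x j = v j - v i0" for j
  define D where "D j = (norm (x j))\<^sup>2" for j
  define r2 where "r2 = 1 / (8 * W\<^sup>2)"
  have Wpos: "W > 0" unfolding assms(3)
    using sum_pos[OF fin, of \<omega>] assms(5) assms(2) by blast
  have nx: "norm (v i - v j) = norm (x i - x j)" for i j by (simp add: x_def)
  have inner: "(\<Sum>j\<in>V - {i}. \<omega> i * \<omega> j * (norm (v i - v j))\<^sup>2) = (\<Sum>j\<in>V. \<omega> i * \<omega> j * (norm (x i - x j))\<^sup>2)"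
    if "i \<in> V" for i
    using sum_diff1[OF fin, of "\<lambda>j. \<omega> i * \<omega> j * (norm (x i - x j))\<^sup>2" i] that by (simp add: nx)
  have "(\<Sum>i\<in>V. \<Sum>j\<in>V - {i}. \<omega> i * \<omega> j * (norm (v i - v j))\<^sup>2) = (\<Sum>i\<in>V. \<Sum>j\<in>V. \<omega> i * \<omega> j * (norm (x i - x j))\<^sup>2)"
    by (rule sum.cong[OF refl]) (rule inner)
  hence two: "2 = (\<Sum>i\<in>V. \<Sum>j\<in>V. \<omega> i * \<omega> j * (norm (x i - x j))\<^sup>2)"
    using assms(4) by linarith
  have pe: "(\<Sum>i\<in>V. \<Sum>j\<in>V. \<omega> i * \<omega> j * (norm (x i - x j))\<^sup>2) = 2 * W * (\<Sum>j\<in>V. \<omega> j * D j) - 2 * (norm (\<Sum>j\<in>V. \<omega> j *\<^sub>R x j))\<^sup>2"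
    unfolding pair_identity D_def assms(3) by (rule refl)
  have "1 \<le> W * (\<Sum>j\<in>V. \<omega> j * D j)"
    using two pe zero_le_power2[of "norm (\<Sum>j\<in>V. \<omega> j *\<^sub>R x j)"] by linarith
  hence S: "(\<Sum>j\<in>V. \<omega> j * D j) \<ge> 1 / W"
    using Wpos by (simp add: divide_le_eq mult.commute)
  have LV: "L \<subseteq> V" using assms(6) by auto
  have finL: "finite L" using LV fin finite_subset by blast
  have i0L: "i0 \<in> L" using assms(5,6) Wpos by simp
  have DL: "D i \<le> r2" if "i \<in> L" for i
    using that assms(6) by (simp add: D_def x_def r2_def norm_minus_commute)
  have "(\<Sum>j\<in>L. \<omega> j * D j) \<le> (\<Sum>j\<in>L. \<omega> j * r2)"
    using DL LV pos by (intro sum_mono mult_left_mono) blast+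
  also have "\<dots> = r2 * (\<Sum>j\<in>L. \<omega> j)" by (simp add: sum_distrib_left mult.commute)
  also have "(\<Sum>j\<in>L. \<omega> j) \<le> W"
    unfolding assms(3) using LV fin pos by (intro sum_mono2) auto
  hence "r2 * (\<Sum>j\<in>L. \<omega> j) \<le> r2 * W" unfolding r2_def by (intro mult_left_mono) auto
  finally have SL: "(\<Sum>j\<in>L. \<omega> j * D j) \<le> r2 * W" .
  have split: "(\<Sum>j\<in>V - L. \<omega> j * D j) = (\<Sum>j\<in>V. \<omega> j * D j) - (\<Sum>j\<in>L. \<omega> j * D j)"
    using sum_diff[OF fin LV] by simp
  have SVL: "(\<Sum>j\<in>V - L. \<omega> j * D j) \<ge> 1 / W - r2 * W" using split S SL by linarith
  have WVL: "(\<Sum>j\<in>V - L. \<omega> j) \<le> W"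
    unfolding assms(3) using fin pos by (intro sum_mono2) auto
  have Dl: "Delta v j L \<ge> D j / 2 - r2" if "j \<in> V - L" for j
  proof -
    have "\<forall>a\<in>(\<lambda>i. (norm (v i - v j))\<^sup>2) ` L. D j / 2 - r2 \<le> a"
    proof
      fix a assume "a \<in> (\<lambda>i. (norm (v i - v j))\<^sup>2) ` L"
      then obtain i where i: "i \<in> L" "a = (norm (x i - x j))\<^sup>2" by (auto simp: nx)
      have "D j \<le> 2 * (norm (x j - x i))\<^sup>2 + 2 * (norm (x i))\<^sup>2"
        using sq_norm_add_le[of "x j - x i" "x i"] by (simp add: D_def)
      then show "D j / 2 - r2 \<le> a" using DL[OF i(1)] i(2)
        by (simp add: D_def norm_minus_commute)
    qed
    thus ?thesis unfolding Delta_def using finL i0L by (intro Min.boundedI) auto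
  qed
  have A: "(\<Sum>j\<in>V - L. \<omega> j * (D j / 2 - r2)) \<le> (\<Sum>j\<in>V - L. \<omega> j * Delta v j L)"
    using Dl pos by (intro sum_mono mult_left_mono) auto
  have B: "(\<Sum>j\<in>V - L. \<omega> j * (D j / 2 - r2)) = (\<Sum>j\<in>V - L. \<omega> j * D j) / 2 - r2 * (\<Sum>j\<in>V - L. \<omega> j)"
    by (simp add: sum_subtractf sum_divide_distrib sum_distrib_left algebra_simps)
  have C: "r2 * (\<Sum>j\<in>V - L. \<omega> j) \<le> r2 * W" using WVL unfolding r2_def by (intro mult_left_mono) auto
  have E: "(1 / W - r2 * W) / 2 - r2 * W \<ge> 1 / (8 * W)"
    using Wpos by (simp add: r2_def power2_eq_square field_simps)
  have F: "(\<Sum>j\<in>V - L. \<omega> j * Delta v j L) \<ge> (\<Sum>j\<in>V - L. \<omega> j * D j) / 2 - r2 * W"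
    using A B C by linarith
  have G: "(\<Sum>j\<in>V - L. \<omega> j * D j) / 2 - r2 * W \<ge> (1 / W - r2 * W) / 2 - r2 * W"
    using divide_right_mono[OF SVL, of 2] by (rule diff_right_mono) simp
  show ?thesis using E F G by linarith
qed

end
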